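(* Let $j\geq1$, let $\lambda=(\lambda_1,\ldots,\lambda_{j-1})$ and $\mu=(\mu_{j+2},\ldots,\mu_\ell)$ be integer vectors, and let $D$ be a valid set of pairs. Assume that $\sigma^j=\sigma^{j+1}$, $(j,j+1)\notin D$, and that for each $h<j$, $(h,j)\in D$ if and only if $(h,j+1)\in D$. (a) For any integers $r$ and $s$, we have $R^D\sigma_{\lambda,r,s,\mu}=-R^D\sigma_{\lambda,s-1,r+1,\mu}$ in $\mathbb{Z}[\sigma]$. (b) For any integer $r$, we have $R^D\tau_{\lambda,r,r,\mu}=R^D\sigma_{\lambda,r,r,\mu}$ in $\mathbb{Z}[\sigma,z]$.
   Context: For each $r\geq1$, $\sigma^r=(\sigma^r_i)_{i\in\mathbb{Z}}$ is a sequence of variables with $\sigma^r_0=1$ and $\sigma^r_i=0$ for $i<0$; $\mathbb{Z}[\sigma]$ is the polynomial ring in the $\sigma^r_i$, $i,r\geq1$ (with the identification $\sigma^j=\sigma^{j+1}$ imposed by the hypothesis). For an integer sequence $\alpha$, $\sigma_\alpha:=\sigma^1_{\alpha_1}\sigma^2_{\alpha_2}\cdots$. $(\lambda,r,s,\mu)$ denotes the concatenated vector $(\lambda_1,\ldots,\lambda_{j-1},r,s,\mu_{j+2},\ldots,\mu_\ell)$. For $i<j$, $R_{ij}$ raises the $i$-th entry by 1 and lowers the $j$-th by 1; a raising operator $R$ is a monomial in the $R_{ij}$, and $R\sigma_\alpha:=\sigma_{R\alpha}$. A valid set of pairs is a finite subset $D$ of $\{(i,j)\in\mathbb{Z}^2\mid1\leq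 i<j\}$ which is an order ideal for the order $(i',j')\leq(i,j)$ iff $i'\leq i$ and $j'\leq j$. $R^D:=\prod_{1\leq i<j\leq\ell}(1-R_{ij})\prod_{(i,j)\in D}(1+R_{ij})^{-1}$, expanded as a power series and applied linearly. Let $z$ be a variable; $\tau^r:=\sigma^r$ for $r\neq j$ and $\tau^j_p:=\sigma^j_p+z\sigma^j_{p-1}$ for $p\in\mathbb{Z}$; $\tau_\alpha:=\tau^1_{\alpha_1}\tau^2_{\alpha_2}\cdots$, $R\tau_\alpha:=\tau_{R\alpha}$. *)

theory Defs
  imports Main "HOL-Library.Groups_Big_Fun"
begin

text \<open>The ring Z[sigma] (modulo the imposed identification) is modelled by evaluation:
  a family of elements sigma r p of an arbitrary commutative ring, indexed by the
  superscript r and the integer subscript p.\<close>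

definition sigma_normalized :: "(nat \<Rightarrow> int \<Rightarrow> 'a::comm_ring_1) \<Rightarrow> bool" where
  "sigma_normalized \<sigma> \<longleftrightarrow> (\<forall>r\<ge>1. \<sigma> r 0 = 1 \<and> (\<forall>i<0. \<sigma> r i = 0))"

text \<open>sigma_alpha = sigma^1_{alpha_1} sigma^2_{alpha_2} ... for a vector alpha of length l
  (given as a list; entry alpha_k is the list element at index k-1).\<close>
definition sigma_mon :: "(nat \<Rightarrow> int \<Rightarrow> 'a::comm_ring_1) \<Rightarrow> int list \<Rightarrow> 'a" where
  "sigma_mon \<sigma> \<alpha> = (\<Prod>k<length \<alpha>. \<sigma> (Suc k) (\<alpha> ! k))"

definition valid_pairs :: "(nat \<times> nat) set \<Rightarrow> bool" where
  "valid_pairs D \<longleftrightarrow> finite D \<and> D \<subseteq> {(i,j). 1 \<le> i \<and> i < j} \<and>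
     (\<forall>i j i' j'. (i,j) \<in> D \<longrightarrow> 1 \<le> i' \<longrightarrow> i' < j' \<longrightarrow> i' \<le> i \<longrightarrow> j' \<le> j \<longrightarrow> (i',j') \<in> D)"

definition pairs_upto :: "nat \<Rightarrow> (nat \<times> nat) set" where
  "pairs_upto l = {(i,j). 1 \<le> i \<and> i < j \<and> j \<le> l}"

text \<open>The raising operator R = prod R_ij^(n(i,j)) applied to an integer vector:
  entry p is raised by n(p,j) for each j > p and lowered by n(i,p) for each i < p.\<close>
definition raise_vec :: "(nat \<times> nat \<Rightarrow> nat) \<Rightarrow> int list \<Rightarrow> int list" where
  "raise_vec n \<alpha> = map (\<lambda>k. \<alpha> ! k + int (\<Sum>j\<in>{Suc (Suc k)..length \<alpha>}. n (Suc k, j))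
                                 - int (\<Sum>i\<in>{1..k}. n (i, Suc k))) [0..<length \<alpha>]"

text \<open>Coefficient of x^m in the power series (1 - x)(1 + x)^{-1} (if the pair is in D),
  resp. in 1 - x (otherwise).\<close>
definition pair_coeff :: "(nat \<times> nat) set \<Rightarrow> nat \<times> nat \<Rightarrow> nat \<Rightarrow> int" where
  "pair_coeff D p m =
     (if p \<in> D then (if m = 0 then 1 else 2 * (-1) ^ m)
      else (if m = 0 then 1 else if m = 1 then -1 else 0))"

text \<open>Coefficient of prod R_ij^(n(i,j)) in R^D = prod_{i<j<=l}(1 - R_ij) prod_{(i,j) in D}(1 + R_ij)^{-1}.\<close>
definition RD_coeff :: "(nat \<times> nat) set \<Rightarrow> nat \<Rightarrow> (nat \<times> nat \<Rightarrow> nat) \<Rightarrow> int" where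
  "RD_coeff D l n = (\<Prod>p\<in>pairs_upto l. pair_coeff D p (n p))"

text \<open>R^D applied (linearly) to sigma_alpha: the sum over all raising operators,
  i.e. all exponent functions n supported on the pairs i<j<=l (only finitely many terms are
  nonzero, since sigma vanishes at negative subscripts).\<close>
definition RD_apply :: "(nat \<times> nat) set \<Rightarrow> (nat \<Rightarrow> int \<Rightarrow> 'a::comm_ring_1) \<Rightarrow> int list \<Rightarrow> 'a" where
  "RD_apply D \<sigma> \<alpha> = Sum_any (\<lambda>n. if (\<forall>p. p \<notin> pairs_upto (length \<alpha>) \<longrightarrow> n p = 0)
       then of_int (RD_coeff D (length \<alpha>) n) * sigma_mon \<sigma> (raise_vec n \<alpha>) else 0)"

definition tau :: "nat \<Rightarrow> 'a::comm_ring_1 \<Rightarrow> (nat \<Rightarrow> int \<Rightarrow> 'a) \<Rightarrow> nat \<Rightarrow> int \<Rightarrow> 'a" where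
  "tau j z \<sigma> r p = (if r = j then \<sigma> j p + z * \<sigma> j (p - 1) else \<sigma> r p)"

end

theory Submission
  imports Defs "HOL-Library.FuncSet"
begin


definition supp_in :: "(nat \<times> nat) set \<Rightarrow> (nat \<times> nat \<Rightarrow> nat) \<Rightarrow> bool" where
  "supp_in S n \<longleftrightarrow> (\<forall>p. p \<notin> S \<longrightarrow> n p = 0)"

definition summ :: "(nat \<times> nat) set \<Rightarrow> (nat \<Rightarrow> int \<Rightarrow> 'a::comm_ring_1) \<Rightarrow> (nat \<times> nat) set \<Rightarrow> int list \<Rightarrow> (nat \<times> nat \<Rightarrow> nat) \<Rightarrow> 'a" where
  "summ D \<sigma> S \<beta> n = (if supp_in S n then of_int (RD_coeff D (length \<beta>) n) * sigma_mon \<sigma> (raise_vec n \<beta>) else 0)"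

definition outs :: "nat \<Rightarrow> (nat \<times> nat \<Rightarrow> nat) \<Rightarrow> nat \<Rightarrow> nat" where
  "outs l n k = (\<Sum>b\<le>l. n (k, b))"
definition ins :: "nat \<Rightarrow> (nat \<times> nat \<Rightarrow> nat) \<Rightarrow> nat \<Rightarrow> nat" where
  "ins l n k = (\<Sum>a\<le>l. n (a, k))"

lemma Sum_any_uminus: "Sum_any (\<lambda>n. - f n) = - Sum_any (f :: _ \<Rightarrow> 'a::ab_group_add)"
proof -
  have "{a. - f a \<noteq> 0} = {a. f a \<noteq> 0}" by auto
  then show ?thesis by (simp add: Sum_any.expand_set sum_negf)
qed

lemma RD_apply_summ: "RD_apply D \<sigma> \<beta> = Sum_any (summ D \<sigma> (pairs_upto (length \<beta>)) \<beta>)"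
  unfolding RD_apply_def summ_def supp_in_def by simp

lemma finite_pairs_upto: "finite (pairs_upto l)"
  by (rule finite_subset[of _ "{..l} \<times> {..l}"]) (auto simp: pairs_upto_def)

lemma length_raise[simp]: "length (raise_vec n \<beta>) = length \<beta>"
  by (simp add: raise_vec_def)

lemma nth_raise:
  assumes "supp_in (pairs_upto (length \<beta>)) n" "i < length \<beta>"
  shows "raise_vec n \<beta> ! i = \<beta> ! i + int (outs (length \<beta>) n (Suc i)) - int (ins (length \<beta>) n (Suc i))"
proof -
  let ?l = "length \<beta>"
  have o: "(\<Sum>j\<in>{Suc (Suc i)..?l}. n (Suc i, j)) = outs ?l n (Suc i)"
    unfolding outs_def
    by (rule sum.mono_neutral_left) (use assms in \<open>auto simp: supp_in_def pairs_upto_def\<close>)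
  have i: "(\<Sum>a\<in>{Suc 0..i}. n (a, Suc i)) = ins ?l n (Suc i)"
    unfolding ins_def
    by (rule sum.mono_neutral_left) (use assms in \<open>auto simp: supp_in_def pairs_upto_def\<close>)
  show ?thesis using assms(2) by (simp add: raise_vec_def o i del: of_nat_sum)
qed

lemma raise_nth_shift:
  assumes "i < length \<beta>"
  shows "raise_vec n (\<beta>[i := \<beta> ! i - 1]) = (raise_vec n \<beta>)[i := raise_vec n \<beta> ! i - 1]"
  using assms by (auto simp: raise_vec_def nth_list_update intro!: nth_equalityI)

lemma sigma_mon_zero:
  assumes "sigma_normalized \<sigma>" "i < length \<gamma>" "\<gamma> ! i < 0"
  shows "sigma_mon \<sigma> \<gamma> = 0"
  unfolding sigma_mon_def
  by (rule prod_zero) (use assms in \<open>auto simp: sigma_normalized_def\<close>)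



lemma finite_bounded_funs:
  assumes "finite P"
  shows "finite {n :: nat \<times> nat \<Rightarrow> nat. supp_in P n \<and> (\<forall>p. n p \<le> B)}"
proof -
  have "{n :: nat \<times> nat \<Rightarrow> nat. supp_in P n \<and> (\<forall>p. n p \<le> B)}
      \<subseteq> (\<lambda>f p. if p \<in> P then f p else 0) ` (PiE P (\<lambda>_. {..B}))"
  proof
    fix n :: "nat \<times> nat \<Rightarrow> nat" assume "n \<in> {n. supp_in P n \<and> (\<forall>p. n p \<le> B)}"
    then have h: "supp_in P n" "\<forall>p. n p \<le> B" by auto
    have "n = (\<lambda>p. if p \<in> P then restrict n P p else 0)"
      using h(1) by (auto simp: supp_in_def fun_eq_iff restrict_def)
    moreover have "restrict n P \<in> PiE P (\<lambda>_. {..B})" using h(2) by auto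
    ultimately show "n \<in> (\<lambda>f p. if p \<in> P then f p else 0) ` (PiE P (\<lambda>_. {..B}))" by blast
  qed
  moreover have "finite (PiE P (\<lambda>_. {..B::nat}))" using assms by (simp add: finite_PiE)
  ultimately show ?thesis by (meson finite_imageI finite_subset)
qed

lemma bound_exists:
  fixes \<beta> :: "int list"
  defines "l \<equiv> length \<beta>"
  shows "\<exists>B. \<forall>n. supp_in (pairs_upto l) n \<and> (\<forall>i<l. 0 \<le> raise_vec n \<beta> ! i)
            \<longrightarrow> (\<forall>a b. l - d < b \<longrightarrow> n (a, b) \<le> B)"
proof (induction d)
  case 0
  show ?case
    by (rule exI[of _ 0]) (auto simp: supp_in_def pairs_upto_def)
next
  case (Suc d)
  then obtain B where B: "\<And>n a b. supp_in (pairs_upto l) n \<Longrightarrow> (\<forall>i<l. 0 \<le> raise_vec n \<beta> ! i)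
            \<Longrightarrow> l - d < b \<Longrightarrow> n (a, b) \<le> B" by blast
  define M where "M = (\<Sum>i<l. nat \<bar>\<beta> ! i\<bar>)"
  show ?case
  proof (rule exI[of _ "M + (l + 2) * B"], intro allI impI)
    fix n a b
    assume H: "supp_in (pairs_upto l) n \<and> (\<forall>i<l. 0 \<le> raise_vec n \<beta> ! i)" and lb: "l - Suc d < b"
    show "n (a, b) \<le> M + (l + 2) * B"
    proof (cases "l - d < b")
      case True
      then show ?thesis using B[of n b a] H by (simp add: add_mult_distrib le_trans[OF _ le_add2])
    next
      case False
      then have bd: "b = l - d" "d < l" "1 \<le> b" "b \<le> l" using lb by auto
      show ?thesis
      proof (cases "(a, b) \<in> pairs_upto l")
        case False
        then show ?thesis using H by (simp add: supp_in_def)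
      next
        case True
        then have al: "a \<le> l" by (auto simp: pairs_upto_def)
        have "n (a, b) \<le> ins l n b" unfolding ins_def
          by (rule member_le_sum[of a "{..l}" "\<lambda>a. n (a, b)", simplified]) (use al in auto)
        moreover have o: "outs l n b \<le> Suc l * B"
        proof -
          have "outs l n b \<le> of_nat (card {..l}) * B" unfolding outs_def
          proof (rule sum_bounded_above[of "{..l}" "\<lambda>c. n (b, c)" B])
            fix c assume "c \<in> {..l}"
            show "n (b, c) \<le> B"
            proof (cases "b < c")
              case True then show ?thesis using B[of n c b] H bd by auto
            next
              case False then show ?thesis using H by (auto simp: supp_in_def pairs_upto_def)
            qed
          qed
          then show ?thesis by simp
        qed
        moreover have "0 \<le> \<beta> ! (b - 1) + int (outs l n b) - int (ins l n b)"
          using H bd nth_raise[of \<beta> n "b - 1"] unfolding l_def[symmetric]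
          by (metis Suc_diff_1 Suc_le_lessD le_less_trans less_one not_le)
        moreover have "\<beta> ! (b - 1) \<le> int M"
        proof -
          have "nat \<bar>\<beta> ! (b - 1)\<bar> \<le> M" unfolding M_def
            by (rule member_le_sum) (use bd in auto)
          then show ?thesis by linarith
        qed
        ultimately show ?thesis by (simp add: algebra_simps)
      qed
    qed
  qed
qed

lemma summ_finite:
  assumes sn: "sigma_normalized \<sigma>" and S: "S \<subseteq> pairs_upto (length \<beta>)"
  shows "finite {n. summ D \<sigma> S \<beta> n \<noteq> 0}"
proof -
  let ?l = "length \<beta>"
  obtain B where B: "\<And>n a b. supp_in (pairs_upto ?l) n \<Longrightarrow> (\<forall>i<?l. 0 \<le> raise_vec n \<beta> ! i)
            \<Longrightarrow> ?l - ?l < b \<Longrightarrow> n (a, b) \<le> B"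
    using bound_exists[of \<beta> ?l] by blast
  have "{n. summ D \<sigma> S \<beta> n \<noteq> 0} \<subseteq> {n. supp_in (pairs_upto ?l) n \<and> (\<forall>p. n p \<le> B)}"
  proof safe
    fix n assume nz: "summ D \<sigma> S \<beta> n \<noteq> 0"
    then have s: "supp_in S n" by (auto simp: summ_def split: if_splits)
    then show sP: "supp_in (pairs_upto ?l) n" using S by (auto simp: supp_in_def)
    have nn: "\<forall>i<?l. 0 \<le> raise_vec n \<beta> ! i"
    proof (rule ccontr)
      assume "\<not> ?thesis"
      then obtain i where "i < ?l" "raise_vec n \<beta> ! i < 0" by auto
      then have "sigma_mon \<sigma> (raise_vec n \<beta>) = 0" using sigma_mon_zero[OF sn] by simp
      then show False using nz by (simp add: summ_def split: if_splits)
    qed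
    fix a b
    show "n (a, b) \<le> B"
    proof (cases "b = 0")
      case True then show ?thesis using sP by (simp add: supp_in_def pairs_upto_def)
    next
      case False then show ?thesis using B[OF sP nn] by simp
    qed
  qed
  then show ?thesis using finite_bounded_funs[OF finite_pairs_upto] by (rule finite_subset)
qed



definition swn :: "nat \<Rightarrow> nat \<Rightarrow> nat" where
  "swn j k = (if k = j then Suc j else if k = Suc j then j else k)"
definition wp :: "nat \<Rightarrow> nat \<times> nat \<Rightarrow> nat \<times> nat" where
  "wp j p = (swn j (fst p), swn j (snd p))"
definition sv :: "nat \<Rightarrow> int list \<Rightarrow> int list" where
  "sv j \<beta> = \<beta>[j - 1 := \<beta> ! j - 1, j := \<beta> ! (j - 1) + 1]"
definition swl :: "nat \<Rightarrow> int list \<Rightarrow> int list" where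
  "swl j \<gamma> = \<gamma>[j - 1 := \<gamma> ! j, j := \<gamma> ! (j - 1)]"

lemma swn_swn[simp]: "swn j (swn j k) = k"
  by (simp add: swn_def)
lemma wp_wp[simp]: "wp j (wp j p) = p"
  by (simp add: wp_def)

lemma length_sv[simp]: "length (sv j \<beta>) = length \<beta>"
  by (simp add: sv_def)
lemma length_swl[simp]: "length (swl j \<beta>) = length \<beta>"
  by (simp add: swl_def)

lemma sv_sv: assumes "1 \<le> j" "j < length \<beta>" shows "sv j (sv j \<beta>) = \<beta>"
  using assms by (auto simp: sv_def nth_list_update intro!: nth_equalityI)

lemma nth_sv: assumes "1 \<le> j" "j < length \<beta>" "i < length \<beta>"
  shows "sv j \<beta> ! i = (if i = j - 1 then \<beta> ! j - 1 else if i = j then \<beta> ! (j - 1) + 1 else \<beta> ! i)"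
  using assms by (auto simp: sv_def nth_list_update)

lemma nth_swl: assumes "1 \<le> j" "j < length \<beta>" "i < length \<beta>"
  shows "swl j \<beta> ! i = (if i = j - 1 then \<beta> ! j else if i = j then \<beta> ! (j - 1) else \<beta> ! i)"
  using assms by (auto simp: swl_def nth_list_update)

lemma sigma_mon_swl:
  assumes "1 \<le> j" "j < length \<gamma>" "\<forall>p. \<sigma> j p = \<sigma> (Suc j) p"
  shows "sigma_mon \<sigma> (swl j \<gamma>) = sigma_mon \<sigma> \<gamma>"
proof -
  let ?L = "length \<gamma>"
  define t where "t k = (if k = j - 1 then j else if k = j then j - 1 else k)" for k
  have tt: "t (t k) = k" for k using assms(1) by (auto simp: t_def)
  have tL: "k < ?L \<Longrightarrow> t k < ?L" for k using assms by (auto simp: t_def)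
  have sig: "\<sigma> (Suc k) = \<sigma> (Suc (t k))" for k
    using assms by (auto simp: t_def fun_eq_iff)
  have "sigma_mon \<sigma> (swl j \<gamma>) = (\<Prod>k<?L. \<sigma> (Suc (t k)) (\<gamma> ! t k))"
    unfolding sigma_mon_def length_swl
  proof (rule prod.cong[OF refl])
    fix k assume "k \<in> {..<?L}"
    then have "swl j \<gamma> ! k = \<gamma> ! t k" using assms by (auto simp: nth_swl t_def)
    then show "\<sigma> (Suc k) (swl j \<gamma> ! k) = \<sigma> (Suc (t k)) (\<gamma> ! t k)" using sig by simp
  qed
  also have "\<dots> = (\<Prod>k<?L. \<sigma> (Suc k) (\<gamma> ! k))"
    by (rule prod.reindex_bij_witness[of _ t t]) (auto simp: tt tL)
  finally show ?thesis by (simp add: sigma_mon_def)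
qed

context
  fixes j l :: nat
  assumes j1: "1 \<le> j" and jl: "Suc j \<le> l"
begin

lemma wp_Q: assumes "p \<in> pairs_upto l - {(j, Suc j)}" shows "wp j p \<in> pairs_upto l - {(j, Suc j)}"
  using assms j1 jl by (cases p) (auto simp: wp_def swn_def pairs_upto_def split: if_splits)

lemma supp_w: "supp_in (pairs_upto l - {(j, Suc j)}) (n \<circ> wp j) \<longleftrightarrow> supp_in (pairs_upto l - {(j, Suc j)}) n"
  unfolding supp_in_def by (metis comp_apply wp_Q wp_wp)

lemma outs_w: "outs l (n \<circ> wp j) k = outs l n (swn j k)"
  unfolding outs_def wp_def
  by (rule sum.reindex_bij_witness[of _ "swn j" "swn j"]) (use jl in \<open>auto simp: swn_def\<close>)

lemma ins_w: "ins l (n \<circ> wp j) k = ins l n (swn j k)"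
  unfolding ins_def wp_def
  by (rule sum.reindex_bij_witness[of _ "swn j" "swn j"]) (use jl in \<open>auto simp: swn_def\<close>)

lemma outs_upd: assumes "n (j, Suc j) = 0"
  shows "outs l (n((j, Suc j) := 1)) k = outs l n k + (if k = j then 1 else 0)"
proof -
  have "outs l (n((j, Suc j) := 1)) k = (\<Sum>b\<le>l. n (k, b) + (if k = j \<and> b = Suc j then 1 else 0))"
    unfolding outs_def using assms by (intro sum.cong) auto
  also have "\<dots> = outs l n k + (\<Sum>b\<le>l. (if k = j \<and> b = Suc j then 1 else 0))"
    by (simp add: sum.distrib outs_def)
  also have "(\<Sum>b\<le>l. (if k = j \<and> b = Suc j then 1 else 0)) = (if k = j then 1 else (0::nat))"
    using jl by (cases "k = j") auto
  finally show ?thesis .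
qed

lemma ins_upd: assumes "n (j, Suc j) = 0"
  shows "ins l (n((j, Suc j) := 1)) k = ins l n k + (if k = Suc j then 1 else 0)"
proof -
  have "ins l (n((j, Suc j) := 1)) k = (\<Sum>a\<le>l. n (a, k) + (if a = j \<and> k = Suc j then 1 else 0))"
    unfolding ins_def using assms by (intro sum.cong) auto
  also have "\<dots> = ins l n k + (\<Sum>a\<le>l. (if a = j \<and> k = Suc j then 1 else 0))"
    by (simp add: sum.distrib ins_def)
  also have "(\<Sum>a\<le>l. (if a = j \<and> k = Suc j then 1 else 0)) = (if k = Suc j then 1 else (0::nat))"
    using jl by (cases "k = Suc j") auto
  finally show ?thesis .
qed

lemma rv_upd:
  assumes len: "length \<beta> = l" and s: "supp_in (pairs_upto l - {(j, Suc j)}) n"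
  shows "raise_vec (n((j, Suc j) := 1)) \<beta> = swl j (sv j (raise_vec n \<beta>))"
proof -
  have n0: "n (j, Suc j) = 0" using s by (simp add: supp_in_def)
  have sP: "supp_in (pairs_upto l) n" using s by (auto simp: supp_in_def)
  have eP: "(j, Suc j) \<in> pairs_upto l" using j1 jl by (simp add: pairs_upto_def)
  have sP': "supp_in (pairs_upto l) (n((j, Suc j) := 1))" using sP eP by (auto simp: supp_in_def)
  show ?thesis
  proof (rule nth_equalityI)
    show "length (raise_vec (n((j, Suc j) := 1)) \<beta>) = length (swl j (sv j (raise_vec n \<beta>)))" by simp
    fix i assume "i < length (raise_vec (n((j, Suc j) := 1)) \<beta>)"
    then have i: "i < l" using len by simp
    have r1: "raise_vec (n((j, Suc j) := 1)) \<beta> ! i = \<beta> ! i + int (outs l n (Suc i) + (if Suc i = j then 1 else 0))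
       - int (ins l n (Suc i) + (if Suc i = Suc j then 1 else 0))"
      using nth_raise[of \<beta> "n((j, Suc j) := 1)" i] sP' i len
      by (simp only: outs_upd[of n, OF n0, symmetric] ins_upd[of n, OF n0, symmetric])
    have r2: "raise_vec n \<beta> ! k = \<beta> ! k + int (outs l n (Suc k)) - int (ins l n (Suc k))" if "k < l" for k
      using nth_raise[of \<beta> n k] sP that len by simp
    show "raise_vec (n((j, Suc j) := 1)) \<beta> ! i = swl j (sv j (raise_vec n \<beta>)) ! i"
      unfolding r1 using i j1 jl len
      by (auto simp add: nth_swl nth_sv r2)
  qed
qed

lemma rv_w:
  assumes len: "length \<beta> = l" and s: "supp_in (pairs_upto l - {(j, Suc j)}) n"
  shows "raise_vec (n \<circ> wp j) (sv j \<beta>) = sv j (raise_vec n \<beta>)"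
proof -
  have sP: "supp_in (pairs_upto l) n" using s by (auto simp: supp_in_def)
  have sP': "supp_in (pairs_upto l) (n \<circ> wp j)" using s supp_w[of n] by (auto simp: supp_in_def)
  show ?thesis
  proof (rule nth_equalityI)
    show "length (raise_vec (n \<circ> wp j) (sv j \<beta>)) = length (sv j (raise_vec n \<beta>))" by simp
    fix i assume "i < length (raise_vec (n \<circ> wp j) (sv j \<beta>))"
    then have i: "i < l" using len by simp
    have r1: "raise_vec (n \<circ> wp j) (sv j \<beta>) ! i = sv j \<beta> ! i + int (outs l n (swn j (Suc i))) - int (ins l n (swn j (Suc i)))"
      using nth_raise[of "sv j \<beta>" "n \<circ> wp j" i] sP' i len
      by (simp add: outs_w ins_w)
    have r2: "raise_vec n \<beta> ! k = \<beta> ! k + int (outs l n (Suc k)) - int (ins l n (Suc k))" if "k < l" for k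
      using nth_raise[of \<beta> n k] sP that len by simp
    show "raise_vec (n \<circ> wp j) (sv j \<beta>) ! i = sv j (raise_vec n \<beta>) ! i"
      unfolding r1 using i j1 jl len
      by (auto simp add: nth_sv r2 swn_def)
  qed
qed

end



context
  fixes j l :: nat and D :: "(nat \<times> nat) set"
  assumes j1: "1 \<le> j" and jl: "Suc j \<le> l" and vD: "valid_pairs D"
    and eD: "(j, Suc j) \<notin> D" and hD: "\<forall>h<j. (h, j) \<in> D \<longleftrightarrow> (h, Suc j) \<in> D"
begin

lemma eP: "(j, Suc j) \<in> pairs_upto l" using j1 jl by (simp add: pairs_upto_def)

lemma RD_coeff_split: "RD_coeff D l n = pair_coeff D (j, Suc j) (n (j, Suc j)) * (\<Prod>p\<in>pairs_upto l - {(j, Suc j)}. pair_coeff D p (n p))"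
  unfolding RD_coeff_def using eP finite_pairs_upto by (simp add: prod.remove)

lemma c_upd: assumes "n (j, Suc j) = 0"
  shows "RD_coeff D l (n((j, Suc j) := 1)) = - RD_coeff D l n"
proof -
  have "(\<Prod>p\<in>pairs_upto l - {(j, Suc j)}. pair_coeff D p ((n((j, Suc j) := 1)) p))
      = (\<Prod>p\<in>pairs_upto l - {(j, Suc j)}. pair_coeff D p (n p))"
    by (rule prod.cong) auto
  then show ?thesis unfolding RD_coeff_split using assms eD by (simp add: pair_coeff_def)
qed

lemma c_big: assumes "2 \<le> n (j, Suc j)" shows "RD_coeff D l n = 0"
  using assms eD by (simp add: RD_coeff_split pair_coeff_def)

lemma D_w: assumes "p \<in> pairs_upto l - {(j, Suc j)}" shows "wp j p \<in> D \<longleftrightarrow> p \<in> D"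
proof -
  obtain a b where p: "p = (a, b)" by (cases p)
  have ab: "1 \<le> a" "a < b" "b \<le> l" "(a, b) \<noteq> (j, Suc j)" using assms p by (auto simp: pairs_upto_def)
  have ideal: "\<And>i j i' j'. (i,j) \<in> D \<Longrightarrow> 1 \<le> i' \<Longrightarrow> i' < j' \<Longrightarrow> i' \<le> i \<Longrightarrow> j' \<le> j \<Longrightarrow> (i',j') \<in> D"
    using vD unfolding valid_pairs_def by blast
  have nj: "(j, c) \<notin> D" "(Suc j, c) \<notin> D" if "Suc j \<le> c" for c
    using ideal[of j c j "Suc j"] ideal[of "Suc j" c j "Suc j"] eD j1 that by auto
  show ?thesis
  proof (cases "a = j \<or> a = Suc j")
    case True
    then have "Suc j < b" using ab by auto
    then show ?thesis using True nj[of b] p by (auto simp: wp_def swn_def)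
  next
    case False
    then show ?thesis using hD ab p by (auto simp: wp_def swn_def)
  qed
qed

lemma c_w: assumes "supp_in (pairs_upto l - {(j, Suc j)}) n"
  shows "RD_coeff D l (n \<circ> wp j) = RD_coeff D l n"
proof -
  let ?Q = "pairs_upto l - {(j, Suc j)}"
  have n0: "n (j, Suc j) = 0" "n (Suc j, j) = 0" using assms by (auto simp: supp_in_def pairs_upto_def)
  have "(\<Prod>p\<in>?Q. pair_coeff D p (n (wp j p))) = (\<Prod>p\<in>?Q. pair_coeff D (wp j p) (n (wp j p)))"
    by (rule prod.cong[OF refl]) (simp add: pair_coeff_def D_w)
  also have "\<dots> = (\<Prod>p\<in>?Q. pair_coeff D p (n p))"
    by (rule prod.reindex_bij_witness[of _ "wp j" "wp j"]) (simp_all only: wp_wp wp_Q[OF j1 jl])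
  finally show ?thesis using n0 by (simp add: RD_coeff_split wp_def swn_def)
qed

end



context
  fixes j l :: nat and D :: "(nat \<times> nat) set" and \<sigma> :: "nat \<Rightarrow> int \<Rightarrow> 'a::comm_ring_1"
  assumes j1: "1 \<le> j" and jl: "Suc j \<le> l" and vD: "valid_pairs D"
    and eD: "(j, Suc j) \<notin> D" and hD: "\<forall>h<j. (h, j) \<in> D \<longleftrightarrow> (h, Suc j) \<in> D"
    and sn: "sigma_normalized \<sigma>" and sj: "\<forall>p. \<sigma> j p = \<sigma> (Suc j) p"
begin

lemma RD_decomp:
  assumes len: "length \<beta> = l"
  shows "RD_apply D \<sigma> \<beta> = Sum_any (summ D \<sigma> (pairs_upto l - {(j, Suc j)}) \<beta>)
                         - Sum_any (summ D \<sigma> (pairs_upto l - {(j, Suc j)}) (sv j \<beta>))"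
proof -
  let ?P = "pairs_upto l" and ?e = "(j, Suc j)"
  let ?Q = "?P - {?e}"
  define F where "F = summ D \<sigma> ?P \<beta>"
  define G where "G = summ D \<sigma> ?Q \<beta>"
  define Gs where "Gs = summ D \<sigma> ?Q (sv j \<beta>)"
  define K where "K n = (if supp_in ?P n \<and> n ?e = 1 then of_int (RD_coeff D l n) * sigma_mon \<sigma> (raise_vec n \<beta>) else 0)" for n
  define G' where "G' n = (if supp_in ?Q n then of_int (RD_coeff D l n) * sigma_mon \<sigma> (sv j (raise_vec n \<beta>)) else 0)" for n
  have suppQ: "supp_in ?Q n \<longleftrightarrow> supp_in ?P n \<and> n ?e = 0" for n
    using eP[OF j1 jl vD eD hD] by (auto simp: supp_in_def)
  have FGK: "F n = G n + K n" for n
  proof -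
    have Fd: "F n = (if supp_in ?P n then of_int (RD_coeff D l n) * sigma_mon \<sigma> (raise_vec n \<beta>) else 0)"
      unfolding F_def summ_def len ..
    have Gd: "G n = (if supp_in ?Q n then of_int (RD_coeff D l n) * sigma_mon \<sigma> (raise_vec n \<beta>) else 0)"
      unfolding G_def summ_def len ..
    consider "\<not> supp_in ?P n" | "supp_in ?P n" "n ?e = 0" | "supp_in ?P n" "n ?e = 1" | "supp_in ?P n" "2 \<le> n ?e" by linarith
    then show ?thesis
    proof cases
      case 1 then show ?thesis unfolding Fd Gd K_def suppQ by simp
    next
      case 2 then show ?thesis unfolding Fd Gd K_def suppQ by simp
    next
      case 3 then show ?thesis unfolding Fd Gd K_def suppQ by simp
    next
      case 4
      then have "RD_coeff D l n = 0" using c_big[OF j1 jl vD eD hD] by blast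
      then show ?thesis unfolding Fd Gd K_def suppQ by simp
    qed
  qed
  have finF: "finite {n. F n \<noteq> 0}" unfolding F_def using summ_finite[OF sn, of ?P \<beta>] len by simp
  have finG: "finite {n. G n \<noteq> 0}" unfolding G_def using summ_finite[OF sn, of ?Q \<beta>] len by auto
  have finK: "finite {n. K n \<noteq> 0}"
  proof (rule finite_subset[OF _ finF])
    show "{n. K n \<noteq> 0} \<subseteq> {n. F n \<noteq> 0}"
      using len by (auto simp: K_def F_def summ_def split: if_splits)
  qed
  have "RD_apply D \<sigma> \<beta> = Sum_any F" using len by (simp add: RD_apply_summ F_def)
  also have "\<dots> = Sum_any G + Sum_any K"
    unfolding FGK by (rule Sum_any.distrib[OF finG finK])
  finally have 1: "RD_apply D \<sigma> \<beta> = Sum_any G + Sum_any K" .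
  define t where "t n = n(?e := (if n ?e = 0 then 1 else if n ?e = 1 then 0 else n ?e))" for n :: "nat \<times> nat \<Rightarrow> nat"
  have tt: "t (t n) = n" for n by (auto simp: t_def fun_eq_iff)
  have Kt: "K (t n) = - G' n" for n
  proof (cases "supp_in ?Q n")
    case True
    then have n0: "n ?e = 0" using suppQ by blast
    have tn: "t n = n(?e := 1)" using n0 by (simp add: t_def)
    have sP: "supp_in ?P (n(?e := 1))" using True eP[OF j1 jl vD eD hD] by (auto simp: supp_in_def)
    have c: "RD_coeff D l (n(?e := 1)) = - RD_coeff D l n" by (rule c_upd[OF j1 jl vD eD hD, of n, OF n0])
    have r: "raise_vec (n(?e := 1)) \<beta> = swl j (sv j (raise_vec n \<beta>))" by (rule rv_upd[OF j1 jl len True])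
    have m: "sigma_mon \<sigma> (swl j (sv j (raise_vec n \<beta>))) = sigma_mon \<sigma> (sv j (raise_vec n \<beta>))"
      by (rule sigma_mon_swl[OF j1 _ sj]) (use jl len in simp)
    have "K (n(?e := 1)) = of_int (RD_coeff D l (n(?e := 1))) * sigma_mon \<sigma> (raise_vec (n(?e := 1)) \<beta>)"
      using sP by (simp add: K_def)
    also have "\<dots> = of_int (- RD_coeff D l n) * sigma_mon \<sigma> (sv j (raise_vec n \<beta>))" by (simp only: c r m)
    also have "\<dots> = - G' n" using True by (simp add: G'_def)
    finally show ?thesis unfolding tn .
  next
    case False
    have "K (t n) = 0"
    proof (rule ccontr)
      assume "K (t n) \<noteq> 0"
      then have h: "supp_in ?P (t n) \<and> t n ?e = 1" unfolding K_def by metis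
      have te: "t n ?e = (if n ?e = 0 then 1 else if n ?e = 1 then 0 else n ?e)" by (simp add: t_def)
      have n0: "n ?e = 0" using h te by (metis zero_neq_one)
      have "t n = n(?e := 1)" using n0 by (simp add: t_def)
      then have hP: "supp_in ?P (n(?e := 1))" using h by metis
      have "supp_in ?Q n" unfolding supp_in_def
      proof (intro allI impI)
        fix p assume p: "p \<notin> ?Q"
        show "n p = 0"
        proof (cases "p = ?e")
          case True then show ?thesis using n0 by simp
        next
          case False
          then have "p \<notin> ?P" using p by simp
          then have "(n(?e := 1)) p = 0" using hP unfolding supp_in_def by blast
          then show ?thesis using False by simp
        qed
      qed
      then show False using False by simp
    qed
    then show ?thesis using False by (simp add: G'_def)
  qed
  have "Sum_any K = Sum_any (\<lambda>n. - G' n)"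
  proof (rule Sum_any.reindex_cong[of t])
    show "bij t" by (rule involuntory_imp_bij, rule tt)
    show "K \<circ> t = (\<lambda>n. - G' n)" by (rule ext) (simp only: comp_apply Kt)
  qed
  also have "\<dots> = - Sum_any G'" by (rule Sum_any_uminus)
  also have "Sum_any G' = Sum_any Gs"
  proof (rule sym, rule Sum_any.reindex_cong[of "\<lambda>n. n \<circ> wp j"])
    show "bij (\<lambda>n. n \<circ> wp j)" by (rule involuntory_imp_bij) (simp add: comp_def)
    show "Gs \<circ> (\<lambda>n. n \<circ> wp j) = G'"
    proof
      fix n
      show "(Gs \<circ> (\<lambda>n. n \<circ> wp j)) n = G' n"
      proof (cases "supp_in ?Q n")
        case True
        then show ?thesis
          using supp_w[OF j1 jl, of n] c_w[OF j1 jl vD eD hD True] rv_w[OF j1 jl len True] len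
          by (simp add: Gs_def G'_def summ_def)
      next
        case False
        then show ?thesis
          using supp_w[OF j1 jl, of n] by (simp add: Gs_def G'_def summ_def)
      qed
    qed
  qed
  finally show ?thesis using 1 by (simp add: G_def Gs_def)

qed

end



lemma tau_mon:
  assumes "1 \<le> j" "j \<le> length \<gamma>"
  shows "sigma_mon (tau j z \<sigma>) \<gamma> = sigma_mon \<sigma> \<gamma> + z * sigma_mon \<sigma> (\<gamma>[j - 1 := \<gamma> ! (j - 1) - 1])"
proof -
  let ?L = "length \<gamma>" and ?i = "j - 1"
  have i: "?i \<in> {..<?L}" using assms by auto
  have sj: "Suc ?i = j" using assms by simp
  define R where "R = (\<Prod>k\<in>{..<?L} - {?i}. \<sigma> (Suc k) (\<gamma> ! k))"
  have R1: "(\<Prod>k\<in>{..<?L} - {?i}. tau j z \<sigma> (Suc k) (\<gamma> ! k)) = R"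
    unfolding R_def by (rule prod.cong) (use sj in \<open>auto simp: tau_def\<close>)
  have R2: "(\<Prod>k\<in>{..<?L} - {?i}. \<sigma> (Suc k) (\<gamma>[?i := \<gamma> ! ?i - 1] ! k)) = R"
    unfolding R_def by (rule prod.cong) auto
  have "sigma_mon (tau j z \<sigma>) \<gamma> = tau j z \<sigma> j (\<gamma> ! ?i) * R"
    unfolding sigma_mon_def using prod.remove[OF finite_lessThan i, of "\<lambda>k. tau j z \<sigma> (Suc k) (\<gamma> ! k)"] R1 sj by simp
  moreover have "sigma_mon \<sigma> \<gamma> = \<sigma> j (\<gamma> ! ?i) * R"
    unfolding sigma_mon_def R_def using prod.remove[OF finite_lessThan i, of "\<lambda>k. \<sigma> (Suc k) (\<gamma> ! k)"] sj by simp
  moreover have "sigma_mon \<sigma> (\<gamma>[?i := \<gamma> ! ?i - 1]) = \<sigma> j (\<gamma> ! ?i - 1) * R"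
    unfolding sigma_mon_def using prod.remove[OF finite_lessThan i, of "\<lambda>k. \<sigma> (Suc k) (\<gamma>[?i := \<gamma> ! ?i - 1] ! k)"] R2 sj i by simp
  ultimately show ?thesis by (simp add: tau_def algebra_simps)
qed

lemma RD_tau:
  assumes "1 \<le> j" "j \<le> length \<alpha>" "sigma_normalized \<sigma>"
  shows "RD_apply D (tau j z \<sigma>) \<alpha> = RD_apply D \<sigma> \<alpha> + z * RD_apply D \<sigma> (\<alpha>[j - 1 := \<alpha> ! (j - 1) - 1])"
proof -
  let ?P = "pairs_upto (length \<alpha>)" and ?a = "\<alpha>[j - 1 := \<alpha> ! (j - 1) - 1]"
  have i: "j - 1 < length \<alpha>" using assms by simp
  have pt: "summ D (tau j z \<sigma>) ?P \<alpha> n = summ D \<sigma> ?P \<alpha> n + z * summ D \<sigma> ?P ?a n" for n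
    unfolding summ_def raise_nth_shift[OF i] using tau_mon[OF assms(1), of "raise_vec n \<alpha>" z \<sigma>] assms(2)
    by (simp add: algebra_simps)
  have f1: "finite {n. summ D \<sigma> ?P \<alpha> n \<noteq> 0}" by (rule summ_finite[OF assms(3)]) simp
  have f2: "finite {n. summ D \<sigma> ?P ?a n \<noteq> 0}" by (rule summ_finite[OF assms(3)]) simp
  have f3: "finite {n. z * summ D \<sigma> ?P ?a n \<noteq> 0}" by (rule finite_subset[OF _ f2]) auto
  have "RD_apply D (tau j z \<sigma>) \<alpha> = Sum_any (\<lambda>n. summ D \<sigma> ?P \<alpha> n + z * summ D \<sigma> ?P ?a n)"
    unfolding RD_apply_summ pt ..
  also have "\<dots> = Sum_any (summ D \<sigma> ?P \<alpha>) + Sum_any (\<lambda>n. z * summ D \<sigma> ?P ?a n)"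
    by (rule Sum_any.distrib[OF f1 f3])
  also have "Sum_any (\<lambda>n. z * summ D \<sigma> ?P ?a n) = z * Sum_any (summ D \<sigma> ?P ?a)"
    by (rule Sum_any_right_distrib[OF f2, symmetric])
  finally show ?thesis by (simp add: RD_apply_summ)
qed

theorem lemma6:
  fixes \<sigma> :: "nat \<Rightarrow> int \<Rightarrow> 'a::comm_ring_1"
    and j :: nat and lam mu :: "int list" and D :: "(nat \<times> nat) set"
  assumes "j \<ge> 1"
    and "length lam = j - 1"
    and "valid_pairs D"
    and "sigma_normalized \<sigma>"
    and "\<forall>p. \<sigma> j p = \<sigma> (Suc j) p"
    and "(j, Suc j) \<notin> D"
    and "\<forall>h<j. (h, j) \<in> D \<longleftrightarrow> (h, Suc j) \<in> D"
  shows "(\<forall>r s. RD_apply D \<sigma> (lam @ [r, s] @ mu) = - RD_apply D \<sigma> (lam @ [s - 1, r + 1] @ mu))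
       \<and> (\<forall>r z. RD_apply D (tau j z \<sigma>) (lam @ [r, r] @ mu) = RD_apply D \<sigma> (lam @ [r, r] @ mu))"
proof -
  note j1 = assms(1) and vD = assms(3) and sn = assms(4) and sj = assms(5) and eD = assms(6) and hD = assms(7)
  define l where "l = Suc j + length mu"
  have jl: "Suc j \<le> l" by (simp add: l_def)
  have jlam: "j = Suc (length lam)" using assms(1,2) by simp
  have len: "length (lam @ [a, b] @ mu) = l" for a b using jlam by (simp add: l_def)
  have svl: "sv j (lam @ [a, b] @ mu) = lam @ [b - 1, a + 1] @ mu" for a b
    unfolding sv_def jlam by (simp add: list_update_append nth_append)
  note dec = RD_decomp[OF j1 jl vD eD hD sn sj]
  have A: "RD_apply D \<sigma> (lam @ [r, s] @ mu) = - RD_apply D \<sigma> (lam @ [s - 1, r + 1] @ mu)" for r s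
    using dec[OF len[of r s]] dec[OF len[of "s - 1" "r + 1"]] svl[of r s] svl[of "s - 1" "r + 1"] by simp
  have B: "RD_apply D (tau j z \<sigma>) (lam @ [r, r] @ mu) = RD_apply D \<sigma> (lam @ [r, r] @ mu)" for r z
  proof -
    have upd: "(lam @ [r, r] @ mu)[j - 1 := (lam @ [r, r] @ mu) ! (j - 1) - 1] = lam @ [r - 1, r] @ mu"
      unfolding jlam by (simp add: list_update_append nth_append)
    have "RD_apply D \<sigma> (lam @ [r - 1, r] @ mu) = 0"
      using dec[OF len[of "r - 1" r]] svl[of "r - 1" r] by simp
    then show ?thesis using RD_tau[OF j1 _ sn, of "lam @ [r, r] @ mu" D z] upd jlam by simp
  qed
  show ?thesis using A B by blast
qed

end
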